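(* Let $n\geq 2$ be an integer and $b:=-n+i$. If $s$ is a neighbour of $T_n$, then $bs+\delta$ is a neighbour of $T_n$ for some $\delta\in\{0,\pm1,\ldots,\pm n^2\}$.
   Context: $T_n$ is the attractor of the iterated function system $\{z\mapsto b^{-1}(z+d): d\in\{0,1,\ldots,n^2\}\}$, i.e. $T_n=\{\sum_{j\ge1}d_jb^{-j}: d_j\in\{0,\ldots,n^2\}\}$. For $Y\subset\mathbb{C}$, a neighbour of $Y$ is a Gaussian integer $s$ with $Y\cap(Y+s)\neq\emptyset$. *)

theory Defs
  imports Complex_Main
begin

definition base :: "nat \<Rightarrow> complex" where
  "base n = - of_nat n + \<i>"

text \<open>T_n = { sum_{j>=1} d_j b^(-j) : d_j in {0,...,n^2} }; the sequence d is indexed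
  from 0, so d j plays the role of d_(j+1).\<close>
definition T :: "nat \<Rightarrow> complex set" where
  "T n = {z. \<exists>d :: nat \<Rightarrow> nat. (\<forall>j. d j \<le> n\<^sup>2) \<and>
              (\<lambda>j. of_nat (d j) / base n ^ Suc j) sums z}"

definition gauss_int :: "complex \<Rightarrow> bool" where
  "gauss_int z \<longleftrightarrow> Re z \<in> \<int> \<and> Im z \<in> \<int>"

definition neighbour :: "complex set \<Rightarrow> complex \<Rightarrow> bool" where
  "neighbour Y s \<longleftrightarrow> gauss_int s \<and> Y \<inter> ((\<lambda>z. z + s) ` Y) \<noteq> {}"

end

theory Submission
  imports Defs
begin

lemma base_nz: "base n \<noteq> 0"
proof
  assume "base n = 0"
  then have "Im (base n) = 0" by simp
  then show False by (simp add: base_def)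
qed

lemma shift_T:
  assumes "(\<lambda>j. of_nat (d j) / base n ^ Suc j) sums z"
  shows "(\<lambda>j. of_nat (d (Suc j)) / base n ^ Suc j) sums (base n * z - of_nat (d 0))"
proof -
  have "(\<lambda>j. base n * (of_nat (d j) / base n ^ Suc j)) sums (base n * z)"
    using sums_mult[OF assms] by blast
  moreover have "\<And>j. base n * (of_nat (d j) / base n ^ Suc j) = of_nat (d j) / base n ^ j"
    using base_nz[of n] by (simp add: field_simps)
  ultimately have "(\<lambda>j. of_nat (d j) / base n ^ j) sums (base n * z)" by simp
  then have "(\<lambda>j. of_nat (d (Suc j)) / base n ^ Suc j) sums (base n * z - of_nat (d 0) / base n ^ 0)"
    using sums_Suc_iff[where f="\<lambda>j. of_nat (d j) / base n ^ j"] by simp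
  then show ?thesis by simp
qed

lemma T_shift:
  assumes "z \<in> T n"
  shows "\<exists>k::nat. k \<le> n\<^sup>2 \<and> base n * z - of_nat k \<in> T n"
proof -
  obtain d where d: "\<forall>j. d j \<le> n\<^sup>2" "(\<lambda>j. of_nat (d j) / base n ^ Suc j) sums z"
    using assms unfolding T_def by blast
  have "base n * z - of_nat (d 0) \<in> T n"
    unfolding T_def using d shift_T[OF d(2)] by (intro CollectI exI[of _ "\<lambda>j. d (Suc j)"]) auto
  then show ?thesis using d(1) by blast
qed

theorem lemma3p6:
  fixes n :: nat and s :: complex
  assumes "n \<ge> 2"
    and "neighbour (T n) s"
  shows "\<exists>\<delta> :: int. \<bar>\<delta>\<bar> \<le> int (n\<^sup>2) \<and> neighbour (T n) (base n * s + of_int \<delta>)"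
proof -
  have g: "gauss_int s" and ne: "T n \<inter> ((\<lambda>z. z + s) ` T n) \<noteq> {}"
    using assms(2) unfolding neighbour_def by auto
  then obtain y where y: "y \<in> T n" "y + s \<in> T n" by auto
  obtain k where k: "k \<le> n\<^sup>2" "base n * (y + s) - of_nat k \<in> T n"
    using T_shift[OF y(2)] by blast
  obtain l where l: "l \<le> n\<^sup>2" "base n * y - of_nat l \<in> T n"
    using T_shift[OF y(1)] by blast
  define \<delta> where "\<delta> = int l - int k"
  have eq: "base n * (y + s) - of_nat k = (base n * y - of_nat l) + (base n * s + of_int \<delta>)"
    unfolding \<delta>_def by (simp add: algebra_simps)
  have "gauss_int (base n * s + of_int \<delta>)"
    using g unfolding gauss_int_def base_def by (auto simp: Ints_add Ints_mult Ints_diff Ints_minus)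
  moreover have "T n \<inter> ((\<lambda>z. z + (base n * s + of_int \<delta>)) ` T n) \<noteq> {}"
    using k(2) l(2) eq by (metis (no_types, lifting) IntI empty_iff image_eqI)
  moreover have "\<bar>\<delta>\<bar> \<le> int (n\<^sup>2)" unfolding \<delta>_def using k(1) l(1) by linarith
  ultimately show ?thesis unfolding neighbour_def by blast
qed

end
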